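(* Assume $G$ is an algebraic torus. Let $(\delta,\delta')$ be an adjacent pair in $\mathsf M_{\mathbb R}\setminus\mathcal H$ separated by $H\in\mathcal H$, $\delta_0$ the point where $[\delta,\delta']$ meets $H$, and $F$ the unique facet of $\delta_0+\boldsymbol\nabla$ parallel to $H$ with $F\cap(\delta+\boldsymbol\nabla)\ne\emptyset$. Then $\mathcal C^F_\delta=\mathcal C_\delta\setminus\mathcal C_{\delta'}$, and hence $\mathcal C_\delta\setminus\mathcal C^F_\delta=\mathcal C_\delta\cap\mathcal C_{\delta'}$.
   Context: $G$ is an algebraic torus over an algebraically closed field of characteristic $0$ with character lattice $\mathsf M$, cocharacter lattice $\mathsf N$. $X$ is a quasi-symmetric representation with weights $\beta_1,\dots,\beta_d$ (for each line $L\subset\mathsf M_{\mathbb R}$, $\sum_{\beta_i\in L}\beta_i=0$); $\boldsymbol\Sigma=\{\sum a_i\beta_i:a_i\in[0,1]\}$ spans $\mathsf M_{\mathbb R}$ and the complement of the linear hyperplanes parallel to facets of $\boldsymbol\Sigma$ is nonempty. $\boldsymbol\nabla=\tfrac12\boldsymbol\Sigma$. $\mathcal H$ = affine hyperplanes $m+B$, $m\in\mathsf M$, $B\cap\boldsymbol\nabla$ a facet of $\boldsymbol\nabla$; adjacent pair: $\delta,\delta'$ avoid $\bigcup\mathcal H$ and exactly one member of $\mathcal H$ meets $[\delta,\delta']$. $\mathcal C_\delta=(\delta+\boldsymbol\nabla)\cap\mathsf M$. For $\chi\in\mathsf M$, $F_\chi(\delta_0)$ is the smallest face of $\delta_0+\boldsymbol\nabla$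 containing $\chi$, and $\mathcal C^F_\delta=\{\chi\in\mathcal C_\delta:\chi\in\partial(\delta_0+\boldsymbol\nabla),\ F_\chi(\delta_0)=F\}$. *)

theory Defs
  imports "HOL-Analysis.Analysis"
begin

text \<open>Character lattice M = Z^n inside M_R = R^n (n = CARD('n)).\<close>
definition lat :: "(real^'n) set" where
  "lat = {x. \<forall>i. x $ i \<in> \<int>}"

definition quasi_symmetric :: "nat \<Rightarrow> (nat \<Rightarrow> real^'n) \<Rightarrow> bool" where
  "quasi_symmetric d \<beta> \<longleftrightarrow>
     (\<forall>L::(real^'n) set. subspace L \<and> dim L = 1 \<longrightarrow>
        (\<Sum>i\<in>{i. i < d \<and> \<beta> i \<in> L}. \<beta> i) = 0)"

definition zonotope :: "nat \<Rightarrow> (nat \<Rightarrow> real^'n) \<Rightarrow> (real^'n) set" where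
  "zonotope d \<beta> = {\<Sum>i<d. a i *\<^sub>R \<beta> i | a. \<forall>i<d. 0 \<le> a i \<and> a i \<le> 1}"

definition nabla :: "nat \<Rightarrow> (nat \<Rightarrow> real^'n) \<Rightarrow> (real^'n) set" where
  "nabla d \<beta> = (\<lambda>x. (1/2) *\<^sub>R x) ` zonotope d \<beta>"

definition affine_hyperplane :: "(real^'n) set \<Rightarrow> bool" where
  "affine_hyperplane B \<longleftrightarrow> (\<exists>a b. a \<noteq> 0 \<and> B = {x. a \<bullet> x = b})"

definition hyps :: "nat \<Rightarrow> (nat \<Rightarrow> real^'n) \<Rightarrow> (real^'n) set set" where
  "hyps d \<beta> = {(+) m ` B | m B. m \<in> lat \<and> affine_hyperplane B \<and> (B \<inter> nabla d \<beta>) facet_of nabla d \<beta>}"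

definition adjacent :: "nat \<Rightarrow> (nat \<Rightarrow> real^'n) \<Rightarrow> real^'n \<Rightarrow> real^'n \<Rightarrow> bool" where
  "adjacent d \<beta> \<delta> \<delta>' \<longleftrightarrow>
     \<delta> \<notin> \<Union>(hyps d \<beta>) \<and> \<delta>' \<notin> \<Union>(hyps d \<beta>) \<and>
     (\<exists>!H. H \<in> hyps d \<beta> \<and> H \<inter> closed_segment \<delta> \<delta>' \<noteq> {})"

definition Cset :: "nat \<Rightarrow> (nat \<Rightarrow> real^'n) \<Rightarrow> real^'n \<Rightarrow> (real^'n) set" where
  "Cset d \<beta> \<delta> = ((+) \<delta> ` nabla d \<beta>) \<inter> lat"

definition min_face :: "(real^'n) set \<Rightarrow> real^'n \<Rightarrow> (real^'n) set" where
  "min_face P x = \<Inter>{F. F face_of P \<and> x \<in> F}"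

definition CFset :: "nat \<Rightarrow> (nat \<Rightarrow> real^'n) \<Rightarrow> real^'n \<Rightarrow> real^'n \<Rightarrow> (real^'n) set \<Rightarrow> (real^'n) set" where
  "CFset d \<beta> \<delta>0 \<delta> F = {c \<in> Cset d \<beta> \<delta>.
      c \<in> frontier ((+) \<delta>0 ` nabla d \<beta>) \<and> min_face ((+) \<delta>0 ` nabla d \<beta>) c = F}"

definition parallel_to :: "(real^'n) set \<Rightarrow> (real^'n) set \<Rightarrow> bool" where
  "parallel_to S H \<longleftrightarrow> (\<exists>v. affine hull S = (+) v ` H)"

end

theory Submission imports Defs begin

lemma qsym_sum0:
  fixes \<beta> :: "nat \<Rightarrow> real^'n"
  assumes q: "quasi_symmetric d \<beta>"
  shows "(\<Sum>i<d. \<beta> i) = 0"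
proof -
  define S where "S = {i. i < d \<and> \<beta> i \<noteq> 0}"
  define g where "g i = span {\<beta> i}" for i
  have fS: "finite S" unfolding S_def by simp
  have "(\<Sum>i<d. \<beta> i) = (\<Sum>i\<in>S. \<beta> i)"
    by (rule sum.mono_neutral_right) (auto simp: S_def)
  also have "\<dots> = (\<Sum>L\<in>g ` S. \<Sum>i\<in>{i. i \<in> S \<and> g i = L}. \<beta> i)"
    by (rule sum.group[symmetric]) (use fS in auto)
  also have "\<dots> = 0"
  proof (rule sum.neutral, rule ballI)
    fix L assume "L \<in> g ` S"
    then obtain j where j: "j \<in> S" "L = span {\<beta> j}" by (auto simp: g_def)
    have sL: "subspace L" and dL: "dim L = 1" using j by (auto simp: S_def)
    have eq: "{i. i \<in> S \<and> g i = L} = {i. i < d \<and> \<beta> i \<in> L} - {i. \<beta> i = 0}"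
    proof (intro set_eqI iffI)
      fix i assume "i \<in> {i. i \<in> S \<and> g i = L}"
      then show "i \<in> {i. i < d \<and> \<beta> i \<in> L} - {i. \<beta> i = 0}"
        by (auto simp: S_def g_def span_base)
    next
      fix i assume i: "i \<in> {i. i < d \<and> \<beta> i \<in> L} - {i. \<beta> i = 0}"
      have "span {\<beta> i} \<subseteq> L" using i sL by (simp add: span_minimal)
      moreover have "dim L \<le> dim (span {\<beta> i})" using i dL by simp
      ultimately have "span {\<beta> i} = L"
        using subspace_dim_equal[of "span {\<beta> i}" L] sL by simp
      then show "i \<in> {i. i \<in> S \<and> g i = L}" using i by (auto simp: S_def g_def)
    qed
    have "(\<Sum>i\<in>{i. i \<in> S \<and> g i = L}. \<beta> i) = (\<Sum>i\<in>{i. i < d \<and> \<beta> i \<in> L}. \<beta> i)"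
      unfolding eq by (rule sum.mono_neutral_left) auto
    also have "\<dots> = 0" using q sL dL by (simp add: quasi_symmetric_def)
    finally show "(\<Sum>i\<in>{i. i \<in> S \<and> g i = L}. \<beta> i) = 0" .
  qed
  finally show ?thesis .
qed

lemma zonotope_sym:
  assumes "(\<Sum>i<d. \<beta> i) = 0" "x \<in> zonotope d \<beta>"
  shows "- x \<in> zonotope d \<beta>"
proof -
  obtain a where a: "\<forall>i<d. 0 \<le> a i \<and> a i \<le> 1" "x = (\<Sum>i<d. a i *\<^sub>R \<beta> i)"
    using assms(2) by (auto simp: zonotope_def)
  have "(\<Sum>i<d. (1 - a i) *\<^sub>R \<beta> i) = (\<Sum>i<d. \<beta> i) - x"
    by (simp add: a(2) scaleR_diff_left sum_subtractf)
  then have "- x = (\<Sum>i<d. (1 - a i) *\<^sub>R \<beta> i)" using assms(1) by simp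
  moreover have "\<forall>i<d. 0 \<le> 1 - a i \<and> 1 - a i \<le> 1" using a(1) by auto
  ultimately show ?thesis unfolding zonotope_def
    by (intro CollectI exI[of _ "\<lambda>i. 1 - a i"]) auto
qed

lemma zonotope_0: "zonotope 0 \<beta> = {0}"
  by (auto simp: zonotope_def)

lemma zonotope_Suc:
  "zonotope (Suc d) \<beta> = (\<lambda>z. fst z + snd z) ` (zonotope d \<beta> \<times> closed_segment 0 (\<beta> d))"
proof (intro set_eqI iffI)
  fix x assume "x \<in> zonotope (Suc d) \<beta>"
  then obtain a where a: "\<forall>i<Suc d. 0 \<le> a i \<and> a i \<le> 1" "x = (\<Sum>i<Suc d. a i *\<^sub>R \<beta> i)"
    by (auto simp: zonotope_def)
  have 1: "(\<Sum>i<d. a i *\<^sub>R \<beta> i) \<in> zonotope d \<beta>"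
    using a(1) unfolding zonotope_def by auto
  have 2: "a d *\<^sub>R \<beta> d \<in> closed_segment 0 (\<beta> d)"
    using a(1) by (auto simp: in_segment)
  have "x = fst ((\<Sum>i<d. a i *\<^sub>R \<beta> i), a d *\<^sub>R \<beta> d) + snd ((\<Sum>i<d. a i *\<^sub>R \<beta> i), a d *\<^sub>R \<beta> d)"
    using a(2) by simp
  then show "x \<in> (\<lambda>z. fst z + snd z) ` (zonotope d \<beta> \<times> closed_segment 0 (\<beta> d))"
    using 1 2 by blast
next
  fix x assume "x \<in> (\<lambda>z. fst z + snd z) ` (zonotope d \<beta> \<times> closed_segment 0 (\<beta> d))"
  then obtain y s where ys: "y \<in> zonotope d \<beta>" "s \<in> closed_segment 0 (\<beta> d)" "x = y + s" by auto
  obtain a where a: "\<forall>i<d. 0 \<le> a i \<and> a i \<le> 1" "y = (\<Sum>i<d. a i *\<^sub>R \<beta> i)"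
    using ys(1) by (auto simp: zonotope_def)
  obtain u where u: "0 \<le> u" "u \<le> 1" "s = u *\<^sub>R \<beta> d" using ys(2) by (auto simp: in_segment)
  define a' where "a' = a(d := u)"
  have "(\<Sum>i<d. a' i *\<^sub>R \<beta> i) = (\<Sum>i<d. a i *\<^sub>R \<beta> i)"
    by (rule sum.cong) (auto simp: a'_def)
  then have "x = (\<Sum>i<Suc d. a' i *\<^sub>R \<beta> i)" using ys a u by (simp add: a'_def)
  moreover have "\<forall>i<Suc d. 0 \<le> a' i \<and> a' i \<le> 1" using a(1) u by (auto simp: a'_def less_Suc_eq)
  ultimately show "x \<in> zonotope (Suc d) \<beta>" unfolding zonotope_def by blast
qed

lemma polytope_zonotope: "polytope (zonotope d \<beta>)"
proof (induction d)
  case 0 then show ?case by (simp add: zonotope_0 polytope_sing)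
next
  case (Suc d)
  have lin: "linear (\<lambda>z::(real^'a) \<times> (real^'a). fst z + snd z)"
    by (simp add: linear_iff algebra_simps)
  have "polytope (closed_segment 0 (\<beta> d))"
    by (simp add: segment_convex_hull polytope_convex_hull)
  then show ?case unfolding zonotope_Suc
    by (intro polytope_linear_image[OF lin] polytope_Times Suc.IH)
qed

lemma polytope_nabla: "polytope (nabla d \<beta>)"
  unfolding nabla_def
  by (intro polytope_linear_image polytope_zonotope) (simp add: linear_iff algebra_simps)

lemma nabla_sym: "(\<Sum>i<d. \<beta> i) = 0 \<Longrightarrow> x \<in> nabla d \<beta> \<Longrightarrow> - x \<in> nabla d \<beta>"
  unfolding nabla_def using zonotope_sym
  by (smt (verit, ccfv_threshold) image_iff scaleR_minus_right)

lemma aff_nabla: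
  assumes "span (zonotope d \<beta>) = UNIV"
  shows "affine hull (nabla d \<beta>) = UNIV"
proof -
  have "0 \<in> zonotope d \<beta>" unfolding zonotope_def by (rule CollectI, rule exI[of _ "\<lambda>i. 0"]) auto
  then have "affine hull (zonotope d \<beta>) = UNIV"
    using affine_hull_span_0 assms hull_inc by metis
  then have "affine hull (nabla d \<beta>) = (\<lambda>x. (1/2) *\<^sub>R x) ` UNIV"
    unfolding nabla_def
    by (metis affine_hull_linear_image bounded_linear_scaleR_right)
  also have "\<dots> = UNIV"
    by (auto intro!: image_eqI[where x = "2 *\<^sub>R x" for x])
  finally show ?thesis .
qed


lemma facet_translate: "G facet_of S \<Longrightarrow> (+) a ` G facet_of (+) a ` (S::(real^'n) set)"
  by (simp add: facet_of_def aff_dim_translation_eq)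

lemma facet_neg: "G facet_of S \<Longrightarrow> uminus ` G facet_of uminus ` (S::(real^'n) set)"
proof -
  assume G: "G facet_of S"
  have l: "linear (uminus :: real^'n \<Rightarrow> real^'n)" by (simp add: linear_iff)
  have i: "inj (uminus :: real^'n \<Rightarrow> real^'n)" by (simp add: inj_def)
  show ?thesis using G unfolding facet_of_def
    by (simp add: face_of_linear_image[OF l i] aff_dim_injective_linear_image[OF l i])
qed

lemma halfside:
  fixes P :: "(real^'n) set"
  assumes "convex P" "F face_of P" "F = P \<inter> {x. e \<bullet> x = k}"
  shows "P \<subseteq> {x. e \<bullet> x \<le> k} \<or> P \<subseteq> {x. e \<bullet> x \<ge> k}"
proof (rule ccontr)
  assume "\<not> ?thesis"
  then obtain y1 y2 where y: "y1 \<in> P" "y2 \<in> P" "e \<bullet> y1 > k" "e \<bullet> y2 < k"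
    by (auto simp: not_le subset_eq)
  define t where "t = (e \<bullet> y1 - k) / (e \<bullet> y1 - e \<bullet> y2)"
  have t: "0 < t" "t < 1" using y by (auto simp: t_def field_simps)
  define z where "z = (1 - t) *\<^sub>R y1 + t *\<^sub>R y2"
  have "y1 \<noteq> y2" using y by auto
  then have zo: "z \<in> open_segment y1 y2" using t by (auto simp: in_segment z_def)
  have "z \<in> P" using assms(1) y t unfolding z_def by (intro convexD) auto
  moreover have "e \<bullet> z = k"
  proof -
    have "e \<bullet> z = e \<bullet> y1 - t * (e \<bullet> y1 - e \<bullet> y2)"
      by (simp add: z_def inner_add_right algebra_simps)
    moreover have "t * (e \<bullet> y1 - e \<bullet> y2) = e \<bullet> y1 - k" using y by (simp add: t_def)
    ultimately show ?thesis by simp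
  qed
  ultimately have "z \<in> F" using assms(3) by auto
  then have "y1 \<in> F" using face_ofD[OF assms(2) zo y(1,2)] by auto
  then show False using assms(3) y by auto
qed

lemma F_form:
  fixes P :: "(real^'n) set"
  assumes "convex P" "F facet_of P" "affine hull F = (+) v ` {x. e \<bullet> x = h}"
  shows "F = P \<inter> {x. e \<bullet> x = h + e \<bullet> v} \<and>
    (P \<subseteq> {x. e \<bullet> x \<le> h + e \<bullet> v} \<or> P \<subseteq> {x. e \<bullet> x \<ge> h + e \<bullet> v})"
proof -
  have "(+) v ` {x. e \<bullet> x = h} = {x. e \<bullet> x = h + e \<bullet> v}"
  proof (intro set_eqI iffI)
    fix x assume "x \<in> {x. e \<bullet> x = h + e \<bullet> v}"
    then show "x \<in> (+) v ` {x. e \<bullet> x = h}"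
      by (intro image_eqI[where x = "x - v"]) (auto simp: inner_diff_right)
  qed (auto simp: inner_add_right)
  then have "F = P \<inter> {x. e \<bullet> x = h + e \<bullet> v}"
    using face_of_imp_eq_affine_Int[OF assms(1) facet_of_imp_face_of[OF assms(2)]] assms(3)
    by auto
  with halfside[OF assms(1) facet_of_imp_face_of[OF assms(2)] this] show ?thesis by blast
qed

lemma key:
  fixes P :: "(real^'n) set"
  assumes "convex P" "F facet_of P" "affine hull F = (+) v ` {x. e \<bullet> x = h}"
    "F \<inter> (+) w ` P \<noteq> {}" "e \<bullet> w \<noteq> 0" "P \<subseteq> {x. e \<bullet> x \<le> k}" "c \<in> P" "e \<bullet> c = k"
    "c \<in> (+) w ` P"
  shows "F = P \<inter> {x. e \<bullet> x = k}"
proof -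
  define k2 where "k2 = h + e \<bullet> v"
  have Ff: "F = P \<inter> {x. e \<bullet> x = k2}" "P \<subseteq> {x. e \<bullet> x \<le> k2} \<or> P \<subseteq> {x. e \<bullet> x \<ge> k2}"
    using F_form[OF assms(1-3)] unfolding k2_def by auto
  obtain x y where xy: "x \<in> F" "y \<in> P" "x = w + y" using assms(4) by auto
  obtain z where z: "z \<in> P" "c = w + z" using assms(9) by auto
  have "e \<bullet> z \<le> k" using assms(6) z by auto
  then have wpos: "e \<bullet> w > 0" using assms(5,8) z by (auto simp: inner_add_right)
  have xk2: "e \<bullet> x = k2" using xy Ff by auto
  from Ff(2) show ?thesis
  proof
    assume le: "P \<subseteq> {x. e \<bullet> x \<le> k2}"
    have "e \<bullet> x \<le> k" using xy Ff assms(6) by auto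
    moreover have "e \<bullet> c \<le> k2" using le assms(7) by auto
    ultimately have "k = k2" using xk2 assms(8) by auto
    then show ?thesis using Ff by simp
  next
    assume ge: "P \<subseteq> {x. e \<bullet> x \<ge> k2}"
    then have "e \<bullet> y \<ge> k2" using xy by auto
    then show ?thesis using xk2 xy wpos by (auto simp: inner_add_right)
  qed
qed

lemma dir1_le:
  fixes P :: "(real^'n) set"
  assumes "F = P \<inter> {x. e \<bullet> x = k}" "P \<subseteq> {x. e \<bullet> x \<le> k}"
    "F \<inter> (+) (\<delta> - \<delta>0) ` P \<noteq> {}" "c \<in> F" "\<delta>0 \<in> closed_segment \<delta> \<delta>'"
    "e \<bullet> \<delta> \<noteq> e \<bullet> \<delta>0" "e \<bullet> \<delta>' \<noteq> e \<bullet> \<delta>0"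
  shows "c \<notin> (+) (\<delta>' - \<delta>0) ` P"
proof
  assume "c \<in> (+) (\<delta>' - \<delta>0) ` P"
  then obtain z where z: "z \<in> P" "c = \<delta>' - \<delta>0 + z" by auto
  obtain x y where xy: "x \<in> F" "y \<in> P" "x = \<delta> - \<delta>0 + y" using assms(3) by auto
  have "e \<bullet> y \<le> k" "e \<bullet> x = k" using xy assms(1,2) by auto
  then have a1: "e \<bullet> \<delta> > e \<bullet> \<delta>0" using xy assms(6) by (auto simp: inner_add_right inner_diff_right)
  have "e \<bullet> z \<le> k" "e \<bullet> c = k" using z assms(1,2,4) by auto
  then have a2: "e \<bullet> \<delta>' > e \<bullet> \<delta>0" using z assms(7) by (auto simp: inner_add_right inner_diff_right)
  obtain u where u: "0 \<le> u" "u \<le> 1" "\<delta>0 = (1 - u) *\<^sub>R \<delta> + u *\<^sub>R \<delta>'"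
    using assms(5) by (auto simp: in_segment)
  have "e \<bullet> \<delta>0 = (1 - u) * (e \<bullet> \<delta>) + u * (e \<bullet> \<delta>')"
    using u(3) by (simp add: inner_add_right)
  moreover have "(1 - u) * (e \<bullet> \<delta>) \<ge> (1 - u) * (e \<bullet> \<delta>0)" using a1 u by (intro mult_left_mono) auto
  moreover have "u * (e \<bullet> \<delta>') \<ge> u * (e \<bullet> \<delta>0)" using a2 u by (intro mult_left_mono) auto
  moreover have "(1 - u) * (e \<bullet> \<delta>) > (1 - u) * (e \<bullet> \<delta>0) \<or> u * (e \<bullet> \<delta>') > u * (e \<bullet> \<delta>0)"
    using a1 a2 u by (cases "u = 1") auto
  ultimately show False by (auto simp: algebra_simps)
qed

lemma dir1:
  fixes P :: "(real^'n) set"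
  assumes "F = P \<inter> {x. e \<bullet> x = k}" "P \<subseteq> {x. e \<bullet> x \<le> k} \<or> P \<subseteq> {x. e \<bullet> x \<ge> k}"
    "F \<inter> (+) (\<delta> - \<delta>0) ` P \<noteq> {}" "c \<in> F" "\<delta>0 \<in> closed_segment \<delta> \<delta>'"
    "e \<bullet> \<delta> \<noteq> e \<bullet> \<delta>0" "e \<bullet> \<delta>' \<noteq> e \<bullet> \<delta>0"
  shows "c \<notin> (+) (\<delta>' - \<delta>0) ` P"
  using assms(2)
proof
  assume "P \<subseteq> {x. e \<bullet> x \<le> k}"
  then show ?thesis using dir1_le[OF assms(1) _ assms(3-7)] by blast
next
  assume "P \<subseteq> {x. e \<bullet> x \<ge> k}"
  then have "P \<subseteq> {x. (-e) \<bullet> x \<le> -k}" by auto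
  moreover have "F = P \<inter> {x. (-e) \<bullet> x = -k}" using assms(1) by auto
  ultimately show ?thesis using dir1_le[of F P "-e" "-k", OF _ _ assms(3-5)] assms(6,7) by auto
qed

lemma seg_unique:
  fixes e :: "real^'n"
  assumes "e \<bullet> \<delta> \<noteq> h" "p \<in> closed_segment \<delta> \<delta>'" "q \<in> closed_segment \<delta> \<delta>'"
    "e \<bullet> p = h" "e \<bullet> q = h"
  shows "p = q"
proof -
  obtain s where s: "p = (1 - s) *\<^sub>R \<delta> + s *\<^sub>R \<delta>'" using assms(2) by (auto simp: in_segment)
  obtain t where t: "q = (1 - t) *\<^sub>R \<delta> + t *\<^sub>R \<delta>'" using assms(3) by (auto simp: in_segment)
  have "(1 - s) * (e \<bullet> \<delta>) + s * (e \<bullet> \<delta>') = h" "(1 - t) * (e \<bullet> \<delta>) + t * (e \<bullet> \<delta>') = h"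
    using assms(4,5) s t by (auto simp: inner_add_right)
  then have "(s - t) * (e \<bullet> \<delta>' - e \<bullet> \<delta>) = 0" by (simp add: algebra_simps)
  moreover have "e \<bullet> \<delta>' \<noteq> e \<bullet> \<delta>"
  proof
    assume "e \<bullet> \<delta>' = e \<bullet> \<delta>"
    moreover have "e \<bullet> p = (1 - s) * (e \<bullet> \<delta>) + s * (e \<bullet> \<delta>')" using s by (simp add: inner_add_right)
    ultimately have "e \<bullet> p = e \<bullet> \<delta>" by (simp add: algebra_simps)
    then show False using assms(1,4) by simp
  qed
  ultimately have "s = t" by simp
  then show ?thesis using s t by simp
qed

lemma hyp_translate: "(+) (m::real^'n) ` {x. a \<bullet> x = b} = {x. a \<bullet> x = b + a \<bullet> m}"
proof (intro set_eqI iffI)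
  fix x assume "x \<in> {x. a \<bullet> x = b + a \<bullet> m}"
  then show "x \<in> (+) m ` {x. a \<bullet> x = b}"
    by (intro image_eqI[where x = "x - m"]) (auto simp: inner_diff_right)
qed (auto simp: inner_add_right)

lemma hyps_form:
  assumes "H \<in> hyps d \<beta>"
  obtains e h where "e \<noteq> 0" "H = {x. e \<bullet> x = h}"
  using assms unfolding hyps_def affine_hyperplane_def
  by (auto simp: hyp_translate)


theorem lemma4p13:
  fixes d :: nat and \<beta> :: "nat \<Rightarrow> real^'n"
    and \<delta> \<delta>' \<delta>0 :: "real^'n" and H F :: "(real^'n) set"
  assumes weights: "\<forall>i<d. \<beta> i \<in> lat"
    and qsym: "quasi_symmetric d \<beta>"
    and spans: "span (zonotope d \<beta>) = UNIV"
    and generic: "UNIV - \<Union>{B. subspace B \<and>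
                     (\<exists>F'. F' facet_of zonotope d \<beta> \<and> parallel_to F' B)} \<noteq> ({} :: (real^'n) set)"
    and adj: "adjacent d \<beta> \<delta> \<delta>'"
    and H: "H \<in> hyps d \<beta>" "H \<inter> closed_segment \<delta> \<delta>' \<noteq> {}"
    and d0: "\<delta>0 \<in> H \<inter> closed_segment \<delta> \<delta>'"
    and F: "F facet_of ((+) \<delta>0 ` nabla d \<beta>)" "parallel_to F H"
           "F \<inter> ((+) \<delta> ` nabla d \<beta>) \<noteq> {}"
  shows "CFset d \<beta> \<delta>0 \<delta> F = Cset d \<beta> \<delta> - Cset d \<beta> \<delta>'
       \<and> Cset d \<beta> \<delta> - CFset d \<beta> \<delta>0 \<delta> F = Cset d \<beta> \<delta> \<inter> Cset d \<beta> \<delta>'"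
proof -
  define N where "N = nabla d \<beta>"
  define P where "P = (+) \<delta>0 ` N"
  have sym: "\<And>x. x \<in> N \<Longrightarrow> - x \<in> N"
    unfolding N_def using nabla_sym qsym_sum0[OF qsym] by blast
  have Npoly: "polyhedron N" unfolding N_def by (simp add: polytope_nabla polytope_imp_polyhedron)
  have Paff: "affine hull P = UNIV"
    unfolding P_def N_def affine_hull_translation aff_nabla[OF spans] by (auto intro!: image_eqI[where x = "x - \<delta>0" for x])
  have Naff: "affine hull N = UNIV" unfolding N_def by (rule aff_nabla[OF spans])
  have Ppoly: "polyhedron P" unfolding P_def N_def
    by (simp add: polytope_nabla polytope_imp_polyhedron polytope_translation_eq)
  have FP: "F facet_of P" using F(1) unfolding P_def N_def .
  have Pconv: "convex P" using Ppoly polyhedron_imp_convex by blast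
  have Pfront: "frontier P = \<Union>{G. G facet_of P}"
    using rel_frontier_of_polyhedron[OF Ppoly] rel_interior_interior[OF Paff]
    by (simp add: rel_frontier_def frontier_def)
  have Nfront: "frontier N = \<Union>{G. G facet_of N}"
    using rel_frontier_of_polyhedron[OF Npoly] rel_interior_interior[OF Naff]
    by (simp add: rel_frontier_def frontier_def)
  have shiftP: "(+) (x - \<delta>0) ` P = (+) x ` N" for x
    unfolding P_def image_image by (simp add: algebra_simps)
  have Cset_eq: "Cset d \<beta> x = (+) (x - \<delta>0) ` P \<inter> lat" for x
    unfolding Cset_def shiftP N_def ..
  have Fd: "F \<inter> (+) (\<delta> - \<delta>0) ` P \<noteq> {}" using F(3) shiftP N_def by simp
  from adj have dH: "\<delta> \<notin> \<Union>(hyps d \<beta>)" "\<delta>' \<notin> \<Union>(hyps d \<beta>)"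
    and ex1: "\<exists>!H. H \<in> hyps d \<beta> \<and> H \<inter> closed_segment \<delta> \<delta>' \<noteq> {}"
    unfolding adjacent_def by auto
  have huniq: "\<And>H2. H2 \<in> hyps d \<beta> \<Longrightarrow> H2 \<inter> closed_segment \<delta> \<delta>' \<noteq> {} \<Longrightarrow> H2 = H"
    using ex1 H by blast
  have dnH: "\<delta> \<notin> H" "\<delta>' \<notin> H" using dH H(1) by auto
  obtain v where v: "affine hull F = (+) v ` H" using F(2) unfolding parallel_to_def by blast
  obtain a0 h0 where a0: "a0 \<noteq> 0" "H = {x. a0 \<bullet> x = h0}" using hyps_form[OF H(1)] by blast
  have Ha0: "H = {x. a0 \<bullet> x = a0 \<bullet> \<delta>0}" using a0 d0 by auto
  have keyF: "F = P \<inter> {x. e \<bullet> x = k}"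
    if "H = {x. e \<bullet> x = e \<bullet> \<delta>0}" "P \<subseteq> {x. e \<bullet> x \<le> k}" "c \<in> P" "e \<bullet> c = k"
       "c \<in> (+) \<delta> ` N" for e k c
  proof -
    have "e \<bullet> (\<delta> - \<delta>0) \<noteq> 0" using dnH(1) that(1) by (auto simp: inner_diff_right)
    then show ?thesis
      using key[OF Pconv FP v[unfolded that(1)] Fd _ that(2-4)] that(5) shiftP by auto
  qed
  have uniq: "G1 = F" if c: "c \<in> lat" "c \<in> (+) \<delta> ` N" and G1: "G1 facet_of P" "c \<in> G1" for c G1
  proof -
    obtain e k where ek: "e \<noteq> 0" "P \<subseteq> {x. e \<bullet> x \<le> k}" "G1 = P \<inter> {x. e \<bullet> x = k}"
      using facet_of_polyhedron[OF Ppoly G1(1)] by blast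
    have cP: "c \<in> P" "e \<bullet> c = k" using ek G1 by auto
    define B1 where "B1 = {x. (-e) \<bullet> x = k - e \<bullet> \<delta>0}"
    have "B1 \<inter> N = uminus ` ((+) (-\<delta>0) ` G1)"
    proof (intro set_eqI iffI)
      fix x assume x: "x \<in> B1 \<inter> N"
      have "\<delta>0 - x \<in> G1" using x sym[of x] ek(3) unfolding B1_def P_def
        by (auto simp: inner_diff_right intro!: image_eqI[where x = "-x"])
      then have "-\<delta>0 + (\<delta>0 - x) \<in> (+) (-\<delta>0) ` G1" by (rule imageI)
      moreover have "x = - (-\<delta>0 + (\<delta>0 - x))" by simp
      ultimately show "x \<in> uminus ` ((+) (-\<delta>0) ` G1)" by (metis image_eqI)
    next
      fix x assume "x \<in> uminus ` ((+) (-\<delta>0) ` G1)"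
      then obtain g where g: "g \<in> G1" "x = -(-\<delta>0 + g)" by auto
      then obtain y where y: "y \<in> N" "g = \<delta>0 + y" using ek(3) unfolding P_def by auto
      have "x = -y" using g y by simp
      then show "x \<in> B1 \<inter> N" using sym[OF y(1)] g y ek(3) unfolding B1_def
        by (auto simp: inner_add_right)
    qed
    moreover have "uminus ` ((+) (-\<delta>0) ` G1) facet_of N"
    proof -
      have "uminus ` ((+) (-\<delta>0) ` G1) facet_of uminus ` ((+) (-\<delta>0) ` P)"
        by (intro facet_neg facet_translate G1(1))
      moreover have "uminus ` ((+) (-\<delta>0) ` P) = N"
        unfolding P_def image_image using sym
        by (auto simp: image_iff intro!: exI[where x = "- x" for x]) (metis minus_minus)
      ultimately show ?thesis by simp
    qed
    ultimately have fB: "B1 \<inter> nabla d \<beta> facet_of nabla d \<beta>" unfolding N_def by simp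
    have hB: "affine_hyperplane B1" unfolding affine_hyperplane_def B1_def using ek(1)
      by (intro exI[of _ "-e"] exI[of _ "k - e \<bullet> \<delta>0"]) auto
    have "(+) c ` B1 \<in> hyps d \<beta>"
      unfolding hyps_def using c(1) hB fB by blast
    moreover have "\<delta>0 \<in> (+) c ` B1"
      using cP unfolding B1_def by (intro image_eqI[where x = "\<delta>0 - c"]) (auto simp: inner_diff_right)
    ultimately have "(+) c ` B1 = H" using d0 huniq by blast
    then have "H = {x. (-e) \<bullet> x = k - e \<bullet> \<delta>0 + (-e) \<bullet> c}" unfolding B1_def hyp_translate by simp
    then have "H = {x. e \<bullet> x = e \<bullet> \<delta>0}" using cP by auto
    then have "F = G1" using keyF[OF _ ek(2) cP c(2)] ek(3) by simp
    then show ?thesis by simp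
  qed
  have part1: "CFset d \<beta> \<delta>0 \<delta> F = Cset d \<beta> \<delta> - Cset d \<beta> \<delta>'"
  proof (intro set_eqI iffI)
    fix c assume c: "c \<in> CFset d \<beta> \<delta>0 \<delta> F"
    then have cF: "c \<in> F" and cC: "c \<in> Cset d \<beta> \<delta>"
      unfolding CFset_def min_face_def by auto
    obtain k2 where k2: "F = P \<inter> {x. a0 \<bullet> x = k2}" "P \<subseteq> {x. a0 \<bullet> x \<le> k2} \<or> P \<subseteq> {x. a0 \<bullet> x \<ge> k2}"
      using F_form[OF Pconv FP, of v a0 "a0 \<bullet> \<delta>0"] v Ha0 by auto
    have "a0 \<bullet> \<delta> \<noteq> a0 \<bullet> \<delta>0" "a0 \<bullet> \<delta>' \<noteq> a0 \<bullet> \<delta>0" using dnH Ha0 by auto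
    then have "c \<notin> (+) (\<delta>' - \<delta>0) ` P"
      using dir1[OF k2 Fd cF _ ] d0 by auto
    then show "c \<in> Cset d \<beta> \<delta> - Cset d \<beta> \<delta>'" using cC Cset_eq by auto
  next
    fix c assume c: "c \<in> Cset d \<beta> \<delta> - Cset d \<beta> \<delta>'"
    then have cl: "c \<in> lat" and cd: "c \<in> (+) \<delta> ` N" and cd': "c \<notin> (+) \<delta>' ` N"
      unfolding Cset_def N_def by auto
    have "\<delta> \<in> (+) c ` N"
    proof -
      obtain y where "y \<in> N" "c = \<delta> + y" using cd by auto
      then show ?thesis using sym by (auto intro!: image_eqI[where x = "-y"])
    qed
    moreover have "\<delta>' \<notin> (+) c ` N"
    proof
      assume "\<delta>' \<in> (+) c ` N"
      then obtain y where "y \<in> N" "\<delta>' = c + y" by auto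
      then show False using sym cd' by (auto intro!: image_eqI[where x = "-y"])
    qed
    ultimately obtain p where p: "p \<in> closed_segment \<delta> \<delta>'" "p \<in> frontier ((+) c ` N)"
      using connected_Int_frontier[of "closed_segment \<delta> \<delta>'" "(+) c ` N"] by blast
    then obtain q where q: "q \<in> frontier N" "p = c + q" by (auto simp: frontier_translation)
    then obtain G where G: "G facet_of N" "q \<in> G" using Nfront by auto
    obtain a1 b1 where ab: "a1 \<noteq> 0" "N \<subseteq> {x. a1 \<bullet> x \<le> b1}" "G = N \<inter> {x. a1 \<bullet> x = b1}"
      using facet_of_polyhedron[OF Npoly G(1)] by blast
    have fB: "{x. a1 \<bullet> x = b1} \<inter> nabla d \<beta> facet_of nabla d \<beta>"
      using ab G(1) unfolding N_def by (simp add: Int_commute)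
    have hB: "affine_hyperplane {x. a1 \<bullet> x = b1}" unfolding affine_hyperplane_def using ab(1)
      by blast
    have "(+) c ` {x. a1 \<bullet> x = b1} \<in> hyps d \<beta>"
      unfolding hyps_def using cl hB fB by blast
    moreover have "p \<in> (+) c ` {x. a1 \<bullet> x = b1}" using q G ab by auto
    ultimately have HH: "H = {x. a1 \<bullet> x = b1 + a1 \<bullet> c}" using huniq p(1)
      by (metis disjoint_iff hyp_translate IntI)
    have "p = \<delta>0"
      using seg_unique[of a1 \<delta> "b1 + a1 \<bullet> c" p \<delta>' \<delta>0] HH dnH p(1) d0 q G ab
      by (auto simp: inner_add_right)
    then have q0: "q = \<delta>0 - c" "a1 \<bullet> (\<delta>0 - c) = b1" using q G ab by auto
    define e where "e = - a1"
    define k where "k = b1 - a1 \<bullet> \<delta>0"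
    have ec: "e \<bullet> c = k" using q0 by (simp add: e_def k_def inner_diff_right)
    have cP: "c \<in> P" unfolding P_def
      using sym[of q] q G ab q0 by (auto intro!: image_eqI[where x = "c - \<delta>0"])
    have Ple: "P \<subseteq> {x. e \<bullet> x \<le> k}"
    proof
      fix x assume "x \<in> P"
      then obtain y where y: "y \<in> N" "x = \<delta>0 + y" unfolding P_def by auto
      have "a1 \<bullet> (-y) \<le> b1" using sym[OF y(1)] ab by auto
      then show "x \<in> {x. e \<bullet> x \<le> k}" using y by (simp add: e_def k_def inner_add_right)
    qed
    have He: "H = {x. e \<bullet> x = e \<bullet> \<delta>0}" using HH q0
      by (auto simp: e_def inner_diff_right)
    have Feq: "F = P \<inter> {x. e \<bullet> x = k}" by (rule keyF[OF He Ple cP ec cd])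
    then have cF: "c \<in> F" using cP ec by auto
    have fr: "c \<in> frontier P" using Pfront cF FP by auto
    have "min_face P c = F"
    proof
      show "min_face P c \<subseteq> F" unfolding min_face_def
        using cF FP facet_of_imp_face_of by blast
      show "F \<subseteq> min_face P c" unfolding min_face_def
      proof (rule Inter_greatest)
        fix F' assume "F' \<in> {F. F face_of P \<and> c \<in> F}"
        then have F': "F' face_of P" "c \<in> F'" by auto
        show "F \<subseteq> F'"
        proof (cases "F' = P")
          case True then show ?thesis using FP facet_of_imp_subset by blast
        next
          case False
          then have "F' = \<Inter>{G. G facet_of P \<and> F' \<subseteq> G}"
            using face_of_polyhedron[OF Ppoly F'(1)] F'(2) by blast
          moreover have "\<And>G. G facet_of P \<Longrightarrow> F' \<subseteq> G \<Longrightarrow> G = F"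
            using uniq[OF cl cd] F'(2) by blast
          ultimately show ?thesis by auto
        qed
      qed
    qed
    then show "c \<in> CFset d \<beta> \<delta>0 \<delta> F"
      using c fr unfolding CFset_def P_def N_def by auto
  qed
  moreover have "CFset d \<beta> \<delta>0 \<delta> F \<subseteq> Cset d \<beta> \<delta>" unfolding CFset_def by auto
  ultimately show ?thesis by auto
qed

end
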